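(* Let $0<p\le 1\le s<\infty$ with $p<s$, $\lambda>n(\frac sp-1)$, and let $s'=s/(s-1)$ (with $n/s'=0$ if $s=1$). Suppose $M$ satisfies, for a ball $B=B(x_B,r)$ and some constant $C>0$: (M1) $\|M\|_{L^s(B)}\le C\,r^{n(1/s-1/p)}$ and (M2) $\big(\int_{B^c}|M(x)|^s|x-x_B|^\lambda dx\big)^{1/s}\le C\,r^{\lambda/s+n(1/s-1/p)}$. Then for every $\gamma\in(\gamma_p,\frac{\lambda}{s}-\frac{n}{s'})$ and the integer $N$ with $N<\gamma\le N+1$, for all $\xi\in\mathbb R^n$, $$|\widehat M(\xi)|\lesssim |\xi|^{\gamma}r^{\gamma-\gamma_p}+\sum_{|\alpha|\le N}|\xi|^{|\alpha|}\Big|\int_{\mathbb R^n}M(x)(x-x_B)^\alpha dx\Big|,$$ with implicit constant depending on $n,p,s,\lambda,\gamma,C$ but not on $M$, $B$ or $\xi$.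
   Context: $\gamma_p=n(1/p-1)$. $\widehat M(\xi)=\int M(x)e^{-2\pi i x\cdot\xi}dx$; $B^c$ is the complement of $B$. (Under (M1),(M2) $M\in L^1$.) *)

theory Defs
  imports "HOL-Analysis.Analysis"
begin

definition fourier_transform :: "(real^'n \<Rightarrow> complex) \<Rightarrow> real^'n \<Rightarrow> complex" where
  "fourier_transform M \<xi> = (\<integral>x. M x * cis (- 2 * pi * (x \<bullet> \<xi>)) \<partial>lborel)"

definition mi_order :: "('n::finite \<Rightarrow> nat) \<Rightarrow> nat" where
  "mi_order \<alpha> = (\<Sum>i\<in>UNIV. \<alpha> i)"

definition mi_pow :: "real^'n::finite \<Rightarrow> ('n \<Rightarrow> nat) \<Rightarrow> real" where
  "mi_pow y \<alpha> = (\<Prod>i\<in>UNIV. (y $ i) ^ \<alpha> i)"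

definition gamma_p :: "nat \<Rightarrow> real \<Rightarrow> real" where
  "gamma_p n p = real n * (1 / p - 1)"

end

theory Submission
  imports Defs "HOL-Probability.Characteristic_Functions"
begin


lemma ennreal_le_suminf: "(f i :: ennreal) \<le> (\<Sum>i. f i)"
  by (metis ennreal_suminf_lessD less_irrefl not_le)

lemma shell_exists:
  fixes u r :: real assumes "r > 0" "u \<ge> r"
  shows "\<exists>k::nat. 2^k * r \<le> u \<and> u < 2^(Suc k) * r"
proof -
  obtain m::nat where m: "u / r < 2^m" using real_arch_pow[of 2 "u/r"] by auto
  hence ex: "\<exists>m::nat. u < 2^m * r" using assms by (auto simp: field_simps)
  define m0 where "m0 = (LEAST m::nat. u < 2^m * r)"
  have a: "u < 2^m0 * r" unfolding m0_def by (rule LeastI_ex[OF ex])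
  have "m0 \<noteq> 0"
  proof
    assume "m0 = 0" with a assms show False by simp
  qed
  then obtain k where k: "m0 = Suc k" by (cases m0) auto
  have "\<not> u < 2^k * r" using not_less_Least[of k "\<lambda>m. u < 2^m * r"] k unfolding m0_def by auto
  thus ?thesis using a k by (intro exI[of _ k]) auto
qed

lemma radial:
  fixes xB :: "'a::euclidean_space" and r b :: real
  assumes r: "r > 0" and b: "b > real DIM('a)"
  shows "(\<integral>\<^sup>+x. ennreal (norm (x - xB) powr (-b)) * indicator (- ball xB r) x \<partial>lborel)
     \<le> ennreal (unit_ball_vol DIM('a) * 2^DIM('a) / (1 - 2 powr (real DIM('a) - b)) * r powr (real DIM('a) - b))"
proof -
  define n where "n = real DIM('a)"
  define q where "q = 2 powr (n - b)"
  have q0: "0 < q" "q < 1" unfolding q_def using b n_def powr_less_mono[of "n-b" 0 2] by auto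
  define S where "S k = ball xB (2^(Suc k) * r) - ball xB (2^k * r)" for k :: nat
  have Smeas: "S k \<in> sets lborel" for k unfolding S_def by auto
  define c where "c k = (2^k * r) powr (-b)" for k :: nat
  have pt: "ennreal (norm (x - xB) powr (-b)) * indicator (- ball xB r) x
      \<le> (\<Sum>k. ennreal (c k) * indicator (S k) x)" for x
  proof (cases "x \<in> ball xB r")
    case True thus ?thesis by simp
  next
    case False
    hence u: "norm (x - xB) \<ge> r" by (auto simp: dist_norm norm_minus_commute)
    obtain k where k: "2^k * r \<le> norm (x - xB)" "norm (x - xB) < 2^(Suc k) * r"
      using shell_exists[OF r u] by auto
    have xS: "x \<in> S k" using k unfolding S_def by (auto simp: dist_norm norm_minus_commute)
    have "norm (x - xB) powr (-b) \<le> c k" unfolding c_def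
      by (rule powr_mono2') (use k r b n_def in auto)
    hence "ennreal (norm (x - xB) powr (-b)) * indicator (- ball xB r) x \<le> ennreal (c k) * indicator (S k) x"
      using False xS by (simp add: ennreal_leI)
    also have "\<dots> \<le> (\<Sum>k. ennreal (c k) * indicator (S k) x)" by (rule ennreal_le_suminf)
    finally show ?thesis .
  qed
  have "(\<integral>\<^sup>+x. ennreal (norm (x - xB) powr (-b)) * indicator (- ball xB r) x \<partial>lborel)
      \<le> (\<integral>\<^sup>+x. (\<Sum>k. ennreal (c k) * indicator (S k) x) \<partial>lborel)"
    by (rule nn_integral_mono) (rule pt)
  also have "\<dots> = (\<Sum>k. \<integral>\<^sup>+x. ennreal (c k) * indicator (S k) x \<partial>lborel)"
    by (rule nn_integral_suminf) (use Smeas in auto)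
  also have "\<dots> = (\<Sum>k. ennreal (c k) * emeasure lborel (S k))"
    using Smeas by (simp add: nn_integral_cmult_indicator)
  also have "\<dots> \<le> (\<Sum>k. ennreal (unit_ball_vol n * 2^DIM('a) * r powr (n - b) * q^k))"
  proof (intro suminf_le summableI)
    fix k :: nat
    have "emeasure lborel (S k) \<le> emeasure lborel (ball xB (2^(Suc k) * r))"
      unfolding S_def by (rule emeasure_mono) auto
    also have "\<dots> = ennreal (unit_ball_vol n * (2^(Suc k) * r) ^ DIM('a))"
      using emeasure_ball[of "2^(Suc k) * r" xB] r n_def by simp
    finally have e: "emeasure lborel (S k) \<le> ennreal (unit_ball_vol n * (2^(Suc k) * r) ^ DIM('a))" .
    have eq: "c k * (unit_ball_vol n * (2^(Suc k) * r) ^ DIM('a)) = unit_ball_vol n * 2^DIM('a) * r powr (n - b) * q^k"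
    proof -
      have e0: "c k = 2 powr (- (b * k)) * r powr (-b)" unfolding c_def
        using r by (simp add: powr_mult powr_realpow[symmetric] powr_powr mult.commute)
      have e1: "(2^(Suc k) * r) ^ DIM('a) = 2^DIM('a) * (r powr n * 2 powr (n * k))"
        using r unfolding n_def
        by (simp add: power_mult_distrib powr_realpow[symmetric] powr_powr power_mult[symmetric] mult.commute powr_add[symmetric] ring_distribs)
      have e3: "q^k = 2 powr (n * k) * 2 powr (- (b * k))" unfolding q_def
        by (simp add: powr_realpow[symmetric] powr_powr powr_add[symmetric] left_diff_distrib)
      have e4: "r powr (n - b) = r powr n * r powr (-b)" using r by (simp add: powr_add[symmetric])
      show ?thesis unfolding e0 e1 e3 e4 by (simp only: mult_ac)
    qed
    have "ennreal (c k) * emeasure lborel (S k) \<le> ennreal (c k) * ennreal (unit_ball_vol n * (2^(Suc k) * r) ^ DIM('a))"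
      by (rule mult_left_mono[OF e]) simp
    also have "\<dots> = ennreal (c k * (unit_ball_vol n * (2^(Suc k) * r) ^ DIM('a)))"
      by (rule ennreal_mult[symmetric]) (use r n_def c_def in auto)
    also have "\<dots> = ennreal (unit_ball_vol n * 2^DIM('a) * r powr (n - b) * q^k)"
      by (simp only: eq)
    finally show "ennreal (c k) * emeasure lborel (S k) \<le> ennreal (unit_ball_vol n * 2^DIM('a) * r powr (n - b) * q^k)" .
  qed
  also have "\<dots> = ennreal (\<Sum>k. unit_ball_vol n * 2^DIM('a) * r powr (n - b) * q^k)"
    by (rule suminf_ennreal2) (use q0 n_def in \<open>auto intro!: summable_mult summable_geometric\<close>)
  also have "(\<Sum>k. unit_ball_vol n * 2^DIM('a) * r powr (n - b) * q^k) = unit_ball_vol n * 2^DIM('a) * r powr (n - b) / (1 - q)"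
    using suminf_geometric[of q] q0 suminf_mult[of "\<lambda>k. q^k" "unit_ball_vol n * 2^DIM('a) * r powr (n - b)"]
    by (simp add: summable_geometric)
  finally show ?thesis unfolding q_def n_def by (simp add: field_simps)
qed


lemma pos_eq_by_ln: "(a::real) > 0 \<Longrightarrow> b > 0 \<Longrightarrow> ln a = ln b \<Longrightarrow> a = b" by simp

lemma int_bound2:
  fixes F G H :: "'a \<Rightarrow> ennreal"
  assumes pt: "\<And>x. F x \<le> ennreal A * G x + ennreal B * H x"
    and G: "G \<in> borel_measurable M" and H: "H \<in> borel_measurable M"
    and IG: "integral\<^sup>N M G \<le> ennreal X" and IH: "integral\<^sup>N M H \<le> ennreal Y"
    and nn: "A \<ge> 0" "B \<ge> 0" "X \<ge> 0" "Y \<ge> 0"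
  shows "integral\<^sup>N M F \<le> ennreal (A * X + B * Y)"
proof -
  have "integral\<^sup>N M F \<le> (\<integral>\<^sup>+x. ennreal A * G x + ennreal B * H x \<partial>M)"
    by (rule nn_integral_mono) (rule pt)
  also have "\<dots> = ennreal A * integral\<^sup>N M G + ennreal B * integral\<^sup>N M H"
    using G H by (simp add: nn_integral_add nn_integral_cmult)
  also have "\<dots> \<le> ennreal A * ennreal X + ennreal B * ennreal Y"
    by (intro add_mono mult_left_mono IG IH) auto
  also have "\<dots> = ennreal (A * X + B * Y)"
    using nn by (simp add: ennreal_mult ennreal_plus)
  finally show ?thesis .
qed

lemma young1:
  fixes a t s :: real assumes "a \<ge> 0" "t > 0" "s \<ge> 1"
  shows "a \<le> a powr s * t powr (1 - s) + t"
proof (cases "a \<le> t")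
  case True thus ?thesis using assms by (simp add: add_nonneg_nonneg order_trans[OF True])
next
  case False
  hence a: "a > t" by simp
  have eq: "a powr s * t powr (1 - s) = a * (a / t) powr (s - 1)"
    apply (rule pos_eq_by_ln) using assms a by (auto simp: ln_mult ln_powr ln_div algebra_simps)
  have "(a/t) powr (s - 1) \<ge> 1" using a assms by (intro ge_one_powr_ge_zero) auto
  hence "a \<le> a * (a / t) powr (s - 1)" using assms a
    by (metis mult.right_neutral mult_left_mono)
  thus ?thesis using eq assms by simp
qed


lemma J_in:
  fixes g :: "'a::euclidean_space \<Rightarrow> real" and xB :: 'a and p s \<gamma> C r :: real
  assumes gm: "g \<in> borel_measurable lborel" and g0: "\<And>x. g x \<ge> 0"
    and p: "p > 0" and s: "s \<ge> 1" and C: "C > 0" and r: "r > 0" and ga: "\<gamma> \<ge> 0"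
    and H1: "(\<integral>\<^sup>+ x \<in> ball xB r. ennreal (g x powr s) \<partial>lborel)
        \<le> ennreal ((C * r powr (real DIM('a) * (1/s - 1/p))) powr s)"
  shows "(\<integral>\<^sup>+x. ennreal (g x * norm (x - xB) powr \<gamma>) * indicator (ball xB r) x \<partial>lborel)
     \<le> ennreal (2 * C * unit_ball_vol (real DIM('a)) powr (1 - 1/s) * r powr (\<gamma> + real DIM('a) - real DIM('a) / p))"
proof -
  have [measurable]: "g \<in> borel_measurable borel" using gm by simp
  have [measurable]: "ball xB r \<in> sets borel" by simp
  define n where "n = real DIM('a)"
  define w where "w = unit_ball_vol n"
  have w: "w > 0" unfolding w_def n_def by simp
  define t where "t = C * w powr (-1/s) * r powr (-n/p)"
  have t: "t > 0" unfolding t_def using C w r by simp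
  define A where "A = r powr \<gamma> * t powr (1-s)"
  define B where "B = r powr \<gamma> * t"
  define X where "X = (C * r powr (n * (1/s - 1/p))) powr s"
  define Y where "Y = w * r ^ DIM('a)"
  have pt: "ennreal (g x * norm (x - xB) powr \<gamma>) * indicator (ball xB r) x
     \<le> ennreal A * (ennreal (g x powr s) * indicator (ball xB r) x) + ennreal B * indicator (ball xB r) x" for x
  proof (cases "x \<in> ball xB r")
    case False thus ?thesis by simp
  next
    case True
    hence u: "norm (x - xB) < r" by (simp add: dist_norm norm_minus_commute)
    have "g x * norm (x - xB) powr \<gamma> \<le> g x * r powr \<gamma>"
      using u ga g0[of x] by (intro mult_left_mono powr_mono2) auto
    also have "\<dots> \<le> r powr \<gamma> * (g x powr s * t powr (1 - s) + t)"
      using mult_left_mono[OF young1[OF g0[of x] t s], of "r powr \<gamma>"] by (simp add: mult.commute)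
    also have "\<dots> = A * g x powr s + B" unfolding A_def B_def by (simp add: algebra_simps)
    finally have "ennreal (g x * norm (x - xB) powr \<gamma>) \<le> ennreal (A * g x powr s + B)" by (rule ennreal_leI)
    also have "\<dots> = ennreal A * ennreal (g x powr s) + ennreal B"
      unfolding A_def B_def using t r by (simp add: ennreal_mult ennreal_plus)
    finally show ?thesis using True by simp
  qed
  have "(\<integral>\<^sup>+x. ennreal (g x * norm (x - xB) powr \<gamma>) * indicator (ball xB r) x \<partial>lborel) \<le> ennreal (A * X + B * Y)"
  proof (rule int_bound2[OF pt])
    show "(\<integral>\<^sup>+ x. ennreal (g x powr s) * indicator (ball xB r) x \<partial>lborel) \<le> ennreal X"
      using H1 unfolding X_def n_def .
    show "(\<integral>\<^sup>+ x. indicator (ball xB r) x \<partial>lborel) \<le> ennreal Y"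
      using emeasure_ball[of r xB] r unfolding Y_def w_def n_def by simp
    show "(\<lambda>x. ennreal (g x powr s) * indicator (ball xB r) x) \<in> borel_measurable lborel" by measurable
    show "indicator (ball xB r) \<in> borel_measurable lborel" by measurable
  qed (use t r w in \<open>auto simp: A_def B_def X_def Y_def\<close>)
  also have "A * X + B * Y = 2 * C * w powr (1 - 1/s) * r powr (\<gamma> + n - n/p)"
  proof -
    have 1: "A * X = C * w powr (1 - 1/s) * r powr (\<gamma> + n - n/p)"
      unfolding A_def X_def t_def
      apply (rule pos_eq_by_ln)
      using C w r s p apply simp
      using C w r s p apply simp
      using C w r s p apply (simp add: ln_mult ln_powr powr_mult)
      apply (simp add: field_simps)
      done
    have 2: "B * Y = C * w powr (1 - 1/s) * r powr (\<gamma> + n - n/p)"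
      unfolding B_def Y_def t_def
      apply (rule pos_eq_by_ln)
      using C w r s p apply simp
      using C w r s p apply simp
      using C w r s p apply (simp add: ln_mult ln_powr powr_mult ln_realpow n_def)
      apply (simp add: field_simps n_def)
      done
    show ?thesis using 1 2 by simp
  qed
  finally show ?thesis unfolding w_def n_def .
qed


lemma J_out:
  fixes g :: "'a::euclidean_space \<Rightarrow> real" and xB :: 'a and p s lam \<gamma> C r :: real
  assumes gm: "g \<in> borel_measurable lborel" and g0: "\<And>x. g x \<ge> 0"
    and p: "p > 0" and s: "s > 1" and C: "C > 0" and r: "r > 0" and ga: "\<gamma> \<ge> 0"
    and lg: "\<gamma> < lam / s - real DIM('a) * (s - 1) / s"
    and H2: "(\<integral>\<^sup>+ x \<in> - ball xB r. ennreal (g x powr s * norm (x - xB) powr lam) \<partial>lborel)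
        \<le> ennreal ((C * r powr (lam / s + real DIM('a) * (1/s - 1/p))) powr s)"
  shows "(\<integral>\<^sup>+x. ennreal (g x * norm (x - xB) powr \<gamma>) * indicator (- ball xB r) x \<partial>lborel)
     \<le> ennreal ((C + C * (unit_ball_vol (real DIM('a)) * 2^DIM('a) / (1 - 2 powr (real DIM('a) - ((lam - \<gamma>)/(s-1) - \<gamma>)))))
          * r powr (\<gamma> + real DIM('a) - real DIM('a) / p))"
proof -
  have [measurable]: "g \<in> borel_measurable borel" using gm by simp
  have [measurable]: "ball xB r \<in> sets borel" by simp
  define n where "n = real DIM('a)"
  define e where "e = (lam - \<gamma>)/(s-1)"
  define b where "b = e - \<gamma>"
  have bn: "b > n"
  proof -
    have "\<gamma> * s < lam - n * (s - 1)" using lg s unfolding n_def by (simp add: field_simps)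
    hence "n * (s - 1) < lam - \<gamma> - \<gamma> * (s - 1)" by (simp add: algebra_simps)
    hence "n < (lam - \<gamma> - \<gamma> * (s - 1)) / (s - 1)" using s by (simp add: field_simps)
    also have "\<dots> = b" unfolding b_def e_def using s by (simp add: field_simps)
    finally show ?thesis .
  qed
  define Kr where "Kr = unit_ball_vol n * 2^DIM('a) / (1 - 2 powr (n - b))"
  have Kr: "Kr > 0" unfolding Kr_def using bn powr_less_mono[of "n-b" 0 2] n_def by simp
  define \<tau> where "\<tau> = C * r powr (-n/p)"
  have \<tau>: "\<tau> > 0" unfolding \<tau>_def using C r by simp
  define A where "A = \<tau> powr (1-s) * r powr (\<gamma> - lam)"
  define B where "B = \<tau> * r powr e"
  define X where "X = (C * r powr (lam / s + n * (1/s - 1/p))) powr s"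
  define Y where "Y = Kr * r powr (n - b)"
  have pt: "ennreal (g x * norm (x - xB) powr \<gamma>) * indicator (- ball xB r) x
     \<le> ennreal A * (ennreal (g x powr s * norm (x - xB) powr lam) * indicator (- ball xB r) x)
       + ennreal B * (ennreal (norm (x - xB) powr (-b)) * indicator (- ball xB r) x)" for x
  proof (cases "x \<in> ball xB r")
    case True thus ?thesis by simp
  next
    case False
    define u where "u = norm (x - xB)"
    have u: "u \<ge> r" using False by (simp add: u_def dist_norm norm_minus_commute)
    have u0: "u > 0" using u r by simp
    define t where "t = \<tau> * (u / r) powr (-e)"
    have t: "t > 0" unfolding t_def using \<tau> u0 r by simp
    have "g x * u powr \<gamma> \<le> (g x powr s * t powr (1 - s) + t) * u powr \<gamma>"
      using mult_right_mono[OF young1[OF g0[of x] t less_imp_le[OF s]], of "u powr \<gamma>"] by simp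
    also have "\<dots> = g x powr s * (t powr (1 - s) * u powr \<gamma>) + t * u powr \<gamma>"
      by (simp add: algebra_simps)
    also have "t powr (1 - s) * u powr \<gamma> = A * u powr lam"
      unfolding t_def A_def
      apply (rule pos_eq_by_ln)
      using \<tau> u0 r apply simp
      using \<tau> u0 r apply simp
      using \<tau> u0 r apply (simp add: ln_mult ln_powr powr_mult ln_div)
      using s apply (simp add: e_def field_simps)
      done
    also have "t * u powr \<gamma> = B * u powr (-b)"
      unfolding t_def B_def
      apply (rule pos_eq_by_ln)
      using \<tau> u0 r apply simp
      using \<tau> u0 r apply simp
      using \<tau> u0 r apply (simp add: ln_mult ln_powr powr_mult ln_div)
      using s apply (simp add: b_def field_simps)
      done
    finally have "g x * u powr \<gamma> \<le> A * (g x powr s * u powr lam) + B * u powr (-b)"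
      by (simp add: algebra_simps)
    hence "ennreal (g x * u powr \<gamma>) \<le> ennreal (A * (g x powr s * u powr lam) + B * u powr (-b))"
      by (rule ennreal_leI)
    also have "\<dots> = ennreal A * ennreal (g x powr s * u powr lam) + ennreal B * ennreal (u powr (-b))"
      unfolding A_def B_def using \<tau> r g0[of x] by (simp add: ennreal_mult ennreal_plus)
    finally show ?thesis using False unfolding u_def by simp
  qed
  have "(\<integral>\<^sup>+x. ennreal (g x * norm (x - xB) powr \<gamma>) * indicator (- ball xB r) x \<partial>lborel) \<le> ennreal (A * X + B * Y)"
  proof (rule int_bound2[OF pt])
    show "(\<integral>\<^sup>+ x. ennreal (g x powr s * norm (x - xB) powr lam) * indicator (- ball xB r) x \<partial>lborel) \<le> ennreal X"
      using H2 unfolding X_def n_def .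
    show "(\<integral>\<^sup>+ x. ennreal (norm (x - xB) powr (-b)) * indicator (- ball xB r) x \<partial>lborel) \<le> ennreal Y"
      using radial[OF r, of b xB] bn unfolding Y_def Kr_def n_def by simp
    show "(\<lambda>x. ennreal (g x powr s * norm (x - xB) powr lam) * indicator (- ball xB r) x) \<in> borel_measurable lborel" by measurable
    show "(\<lambda>x. ennreal (norm (x - xB) powr (-b)) * indicator (- ball xB r) x) \<in> borel_measurable lborel" by measurable
  qed (use \<tau> r Kr in \<open>auto simp: A_def B_def X_def Y_def\<close>)
  also have "A * X + B * Y = (C + C * Kr) * r powr (\<gamma> + n - n/p)"
  proof -
    have 1: "A * X = C * r powr (\<gamma> + n - n/p)"
      unfolding A_def X_def \<tau>_def
      apply (rule pos_eq_by_ln)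
      using C r s p apply simp
      using C r s p apply simp
      using C r s p apply (simp add: ln_mult ln_powr powr_mult)
      using s p apply (simp add: field_simps)
      done
    have 2: "B * Y = C * Kr * r powr (\<gamma> + n - n/p)"
      unfolding B_def Y_def \<tau>_def
      apply (rule pos_eq_by_ln)
      using C r s p Kr apply simp
      using C r s p Kr apply simp
      using C r s p Kr apply (simp add: ln_mult ln_powr powr_mult)
      using s p apply (simp add: field_simps b_def)
      done
    show ?thesis using 1 2 by (simp add: algebra_simps)
  qed
  finally show ?thesis unfolding Kr_def b_def e_def n_def .
qed


lemma J_out1:
  fixes g :: "'a::euclidean_space \<Rightarrow> real" and xB :: 'a and p s lam \<gamma> C r :: real
  assumes gm: "g \<in> borel_measurable lborel" and g0: "\<And>x. g x \<ge> 0"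
    and p: "p > 0" and s: "s = 1" and C: "C > 0" and r: "r > 0"
    and lg: "\<gamma> < lam"
    and H2: "(\<integral>\<^sup>+ x \<in> - ball xB r. ennreal (g x powr s * norm (x - xB) powr lam) \<partial>lborel)
        \<le> ennreal ((C * r powr (lam / s + real DIM('a) * (1/s - 1/p))) powr s)"
  shows "(\<integral>\<^sup>+x. ennreal (g x * norm (x - xB) powr \<gamma>) * indicator (- ball xB r) x \<partial>lborel)
     \<le> ennreal (C * r powr (\<gamma> + real DIM('a) - real DIM('a) / p))"
proof -
  have [measurable]: "g \<in> borel_measurable borel" using gm by simp
  have [measurable]: "ball xB r \<in> sets borel" by simp
  define n where "n = real DIM('a)"
  define A where "A = r powr (\<gamma> - lam)"
  define X where "X = (C * r powr (lam / s + n * (1/s - 1/p))) powr s"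
  have pt: "ennreal (g x * norm (x - xB) powr \<gamma>) * indicator (- ball xB r) x
     \<le> ennreal A * (ennreal (g x powr s * norm (x - xB) powr lam) * indicator (- ball xB r) x)
       + ennreal 0 * (\<lambda>_. 0) x" for x
  proof (cases "x \<in> ball xB r")
    case True thus ?thesis by simp
  next
    case False
    define u where "u = norm (x - xB)"
    have u: "u \<ge> r" using False by (simp add: u_def dist_norm norm_minus_commute)
    have u0: "u > 0" using u r by simp
    have "u powr \<gamma> = u powr lam * u powr (\<gamma> - lam)" using u0 by (simp add: powr_add[symmetric])
    also have "\<dots> \<le> u powr lam * r powr (\<gamma> - lam)"
      by (intro mult_left_mono powr_mono2') (use u r lg in auto)
    finally have "g x * u powr \<gamma> \<le> g x * (u powr lam * r powr (\<gamma> - lam))"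
      by (rule mult_left_mono) (rule g0)
    also have "\<dots> = A * (g x powr s * u powr lam)" using g0[of x] s unfolding A_def by (simp add: powr_one)
    finally have "ennreal (g x * u powr \<gamma>) \<le> ennreal (A * (g x powr s * u powr lam))"
      by (rule ennreal_leI)
    also have "\<dots> = ennreal A * ennreal (g x powr s * u powr lam)"
      unfolding A_def using r g0[of x] by (simp add: ennreal_mult)
    finally show ?thesis using False unfolding u_def by simp
  qed
  have "(\<integral>\<^sup>+x. ennreal (g x * norm (x - xB) powr \<gamma>) * indicator (- ball xB r) x \<partial>lborel) \<le> ennreal (A * X + 0 * 0)"
  proof (rule int_bound2[OF pt])
    show "(\<integral>\<^sup>+ x. ennreal (g x powr s * norm (x - xB) powr lam) * indicator (- ball xB r) x \<partial>lborel) \<le> ennreal X"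
      using H2 unfolding X_def n_def .
    show "(\<lambda>x. ennreal (g x powr s * norm (x - xB) powr lam) * indicator (- ball xB r) x) \<in> borel_measurable lborel" by measurable
  qed (use r C in \<open>auto simp: A_def X_def\<close>)
  also have "A * X + 0 * 0 = C * r powr (\<gamma> + n - n/p)"
    unfolding A_def X_def using s C r
    by (simp add: powr_mult powr_add[symmetric] powr_one) (simp add: algebra_simps)
  finally show ?thesis unfolding n_def .
qed

definition Jc :: "real \<Rightarrow> real \<Rightarrow> real \<Rightarrow> real \<Rightarrow> real \<Rightarrow> real" where
  "Jc n s lam \<gamma> C = 2 * C * unit_ball_vol n powr (1 - 1/s) + C
     + C * \<bar>unit_ball_vol n * 2 powr n / (1 - 2 powr (n - ((lam - \<gamma>)/(s-1) - \<gamma>)))\<bar>"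

lemma J_all:
  fixes g :: "'a::euclidean_space \<Rightarrow> real" and xB :: 'a and p s lam \<gamma> C r :: real
  assumes gm: "g \<in> borel_measurable lborel" and g0: "\<And>x. g x \<ge> 0"
    and p: "p > 0" and s: "s \<ge> 1" and C: "C > 0" and r: "r > 0" and ga: "\<gamma> \<ge> 0"
    and lg: "\<gamma> < lam / s - real DIM('a) * (s - 1) / s"
    and H1: "(\<integral>\<^sup>+ x \<in> ball xB r. ennreal (g x powr s) \<partial>lborel)
        \<le> ennreal ((C * r powr (real DIM('a) * (1/s - 1/p))) powr s)"
    and H2: "(\<integral>\<^sup>+ x \<in> - ball xB r. ennreal (g x powr s * norm (x - xB) powr lam) \<partial>lborel)
        \<le> ennreal ((C * r powr (lam / s + real DIM('a) * (1/s - 1/p))) powr s)"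
  shows "(\<integral>\<^sup>+x. ennreal (g x * norm (x - xB) powr \<gamma>) \<partial>lborel)
     \<le> ennreal (Jc (real DIM('a)) s lam \<gamma> C * r powr (\<gamma> + real DIM('a) - real DIM('a) / p))"
proof -
  have [measurable]: "g \<in> borel_measurable borel" using gm by simp
  have [measurable]: "ball xB r \<in> sets borel" by simp
  define n where "n = real DIM('a)"
  define R where "R = r powr (\<gamma> + n - n/p)"
  have R: "R > 0" unfolding R_def using r by simp
  define Kr where "Kr = unit_ball_vol n * 2 powr n / (1 - 2 powr (n - ((lam - \<gamma>)/(s-1) - \<gamma>)))"
  have "(\<integral>\<^sup>+x. ennreal (g x * norm (x - xB) powr \<gamma>) \<partial>lborel)
     = (\<integral>\<^sup>+x. ennreal (g x * norm (x - xB) powr \<gamma>) * indicator (ball xB r) x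
          + ennreal (g x * norm (x - xB) powr \<gamma>) * indicator (- ball xB r) x \<partial>lborel)"
    by (intro nn_integral_cong) (auto split: split_indicator)
  also have "\<dots> = (\<integral>\<^sup>+x. ennreal (g x * norm (x - xB) powr \<gamma>) * indicator (ball xB r) x \<partial>lborel)
          + (\<integral>\<^sup>+x. ennreal (g x * norm (x - xB) powr \<gamma>) * indicator (- ball xB r) x \<partial>lborel)"
    by (rule nn_integral_add) measurable
  also have "\<dots> \<le> ennreal (2 * C * unit_ball_vol n powr (1 - 1/s) * R) + ennreal ((C + C * \<bar>Kr\<bar>) * R)"
  proof (rule add_mono)
    show "(\<integral>\<^sup>+x. ennreal (g x * norm (x - xB) powr \<gamma>) * indicator (ball xB r) x \<partial>lborel)
       \<le> ennreal (2 * C * unit_ball_vol n powr (1 - 1/s) * R)"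
      using J_in[OF gm g0 p s C r ga H1] unfolding R_def n_def .
    show "(\<integral>\<^sup>+x. ennreal (g x * norm (x - xB) powr \<gamma>) * indicator (- ball xB r) x \<partial>lborel)
       \<le> ennreal ((C + C * \<bar>Kr\<bar>) * R)"
    proof (cases "s = 1")
      case True
      have "\<gamma> < lam" using lg True by simp
      from J_out1[OF gm g0 p True C r this H2]
      have "(\<integral>\<^sup>+x. ennreal (g x * norm (x - xB) powr \<gamma>) * indicator (- ball xB r) x \<partial>lborel) \<le> ennreal (C * R)"
        unfolding R_def n_def .
      also have "\<dots> \<le> ennreal ((C + C * \<bar>Kr\<bar>) * R)"
        using C R by (intro ennreal_leI mult_right_mono) auto
      finally show ?thesis .
    next
      case False
      hence s1: "s > 1" using s by simp
      from J_out[OF gm g0 p s1 C r ga lg H2]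
      have "(\<integral>\<^sup>+x. ennreal (g x * norm (x - xB) powr \<gamma>) * indicator (- ball xB r) x \<partial>lborel) \<le> ennreal ((C + C * Kr) * R)"
        unfolding R_def n_def Kr_def by (simp add: powr_realpow)
      also have "\<dots> \<le> ennreal ((C + C * \<bar>Kr\<bar>) * R)"
        using C R by (intro ennreal_leI mult_right_mono add_left_mono) auto
      finally show ?thesis .
    qed
  qed
  also have "\<dots> = ennreal (2 * C * unit_ball_vol n powr (1 - 1/s) * R + (C + C * \<bar>Kr\<bar>) * R)"
    by (rule ennreal_plus[symmetric]) (use C R in auto)
  also have "2 * C * unit_ball_vol n powr (1 - 1/s) * R + (C + C * \<bar>Kr\<bar>) * R = Jc n s lam \<gamma> C * R"
    unfolding Jc_def Kr_def by (simp add: algebra_simps)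
  finally show ?thesis unfolding R_def n_def .
qed


definition cnt :: "nat \<Rightarrow> (nat \<Rightarrow> 'n::finite) \<Rightarrow> 'n \<Rightarrow> nat" where
  "cnt k g i = card {j \<in> {..<k}. g j = i}"

lemma prod_fiber_pow:
  fixes a :: "'n::finite \<Rightarrow> 'b::comm_monoid_mult"
  shows "(\<Prod>j<k. a (g j)) = (\<Prod>i\<in>UNIV. a i ^ cnt k g i)"
proof -
  have "(\<Prod>i\<in>UNIV. \<Prod>j\<in>{j \<in> {..<k}. g j = i}. a (g j)) = (\<Prod>j<k. a (g j))"
    by (rule prod.group) auto
  moreover have "(\<Prod>j\<in>{j \<in> {..<k}. g j = i}. a (g j)) = a i ^ cnt k g i" for i
  proof -
    have "(\<Prod>j\<in>{j \<in> {..<k}. g j = i}. a (g j)) = (\<Prod>j\<in>{j \<in> {..<k}. g j = i}. a i)"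
      by (rule prod.cong) auto
    thus ?thesis unfolding cnt_def by simp
  qed
  ultimately show ?thesis by simp
qed

lemma mi_order_cnt: "mi_order (cnt k (g :: nat \<Rightarrow> 'n::finite)) = k"
proof -
  have "(\<Sum>i\<in>(UNIV::'n set). \<Sum>j\<in>{j \<in> {..<k}. g j = i}. (1::nat)) = (\<Sum>j<k. 1)"
    by (rule sum.group) auto
  thus ?thesis unfolding mi_order_def cnt_def by simp
qed

lemma inner_pow_expand:
  fixes y \<xi> :: "real^'n"
  shows "(y \<bullet> \<xi>)^k = (\<Sum>g \<in> PiE {..<k} (\<lambda>_. UNIV). mi_pow \<xi> (cnt k g) * mi_pow y (cnt k g))"
proof -
  have "(y \<bullet> \<xi>)^k = (\<Prod>j\<in>{..<k}. \<Sum>i\<in>UNIV. y$i * \<xi>$i)"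
    by (simp add: inner_vec_def)
  also have "\<dots> = (\<Sum>g \<in> PiE {..<k} (\<lambda>_. UNIV). \<Prod>j\<in>{..<k}. y$(g j) * \<xi>$(g j))"
    by (rule prod_sum_PiE) auto
  also have "\<dots> = (\<Sum>g \<in> PiE {..<k} (\<lambda>_. UNIV). mi_pow \<xi> (cnt k g) * mi_pow y (cnt k g))"
  proof (rule sum.cong[OF refl])
    fix g :: "nat \<Rightarrow> 'n"
    have "(\<Prod>j<k. y$(g j) * \<xi>$(g j)) = (\<Prod>i\<in>UNIV. (y$i * \<xi>$i) ^ cnt k g i)"
      by (rule prod_fiber_pow)
    also have "\<dots> = mi_pow \<xi> (cnt k g) * mi_pow y (cnt k g)"
      unfolding mi_pow_def by (simp add: power_mult_distrib prod.distrib mult.commute)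
    finally show "(\<Prod>j\<in>{..<k}. y$(g j) * \<xi>$(g j)) = mi_pow \<xi> (cnt k g) * mi_pow y (cnt k g)" .
  qed
  finally show ?thesis .
qed

lemma card_PiE_UNIV: "card (PiE {..<k} (\<lambda>_. UNIV :: 'n::finite set)) = CARD('n) ^ k"
  by (simp add: card_PiE)

lemma mi_pow_bound: "\<bar>mi_pow (y::real^'n::finite) \<alpha>\<bar> \<le> norm y ^ mi_order \<alpha>"
proof -
  have "\<bar>mi_pow y \<alpha>\<bar> = (\<Prod>i\<in>UNIV. \<bar>y$i\<bar> ^ \<alpha> i)"
    unfolding mi_pow_def by (simp add: abs_prod power_abs)
  also have "\<dots> \<le> (\<Prod>i\<in>UNIV. norm y ^ \<alpha> i)"
    by (intro prod_mono conjI power_mono) (auto simp: component_le_norm_cart[of y, simplified])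
  also have "\<dots> = norm y ^ mi_order \<alpha>" unfolding mi_order_def by (simp add: power_sum)
  finally show ?thesis .
qed

lemma finite_mi: "finite {\<alpha> :: 'n::finite \<Rightarrow> nat. mi_order \<alpha> \<le> N}"
proof -
  have "{\<alpha> :: 'n \<Rightarrow> nat. mi_order \<alpha> \<le> N} \<subseteq> PiE UNIV (\<lambda>_. {..N})"
  proof
    fix \<alpha> :: "'n \<Rightarrow> nat" assume "\<alpha> \<in> {\<alpha>. mi_order \<alpha> \<le> N}"
    hence "\<alpha> i \<le> N" for i unfolding mi_order_def
      using member_le_sum[of i UNIV \<alpha>] by auto
    thus "\<alpha> \<in> PiE UNIV (\<lambda>_. {..N})" by auto
  qed
  moreover have "finite (PiE (UNIV::'n set) (\<lambda>_. {..N}))" by (rule finite_PiE) auto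
  ultimately show ?thesis by (rule finite_subset)
qed


lemma div_fact_le: "(a::real) \<ge> 0 \<Longrightarrow> a / fact n \<le> a"
  using divide_left_mono[of 1 "fact n" a] by (simp add: fact_ge_1)

lemma taylor_rem:
  assumes g1: "real N < \<gamma>" and g2: "\<gamma> \<le> real N + 1"
  shows "cmod (iexp x - (\<Sum>k\<le>N. (\<i> * x)^k / fact k)) \<le> 2 * \<bar>x\<bar> powr \<gamma>"
proof (cases "\<bar>x\<bar> \<le> 1")
  case True
  have "cmod (iexp x - (\<Sum>k\<le>N. (\<i> * x)^k / fact k)) \<le> \<bar>x\<bar>^(Suc N) / fact (Suc N)"
    by (rule iexp_approx1)
  also have "\<dots> \<le> \<bar>x\<bar>^(Suc N)"
    by (rule div_fact_le) simp
  also have "\<dots> \<le> \<bar>x\<bar> powr \<gamma>"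
  proof (cases "x = 0")
    case True thus ?thesis using g1 by simp
  next
    case False
    hence "\<bar>x\<bar>^(Suc N) = \<bar>x\<bar> powr (real (Suc N))" by (subst powr_realpow) auto
    also have "\<dots> \<le> \<bar>x\<bar> powr \<gamma>" by (rule powr_mono') (use True g2 in auto)
    finally show ?thesis .
  qed
  finally show ?thesis by (smt (verit) powr_ge_zero)
next
  case False
  have "cmod (iexp x - (\<Sum>k\<le>N. (\<i> * x)^k / fact k)) \<le> 2 * \<bar>x\<bar>^N / fact N"
    by (rule iexp_approx2)
  also have "\<dots> \<le> 2 * \<bar>x\<bar>^N"
    by (rule div_fact_le) simp
  also have "\<bar>x\<bar>^N = \<bar>x\<bar> powr (real N)" using False by (subst powr_realpow) auto
  also have "\<dots> \<le> \<bar>x\<bar> powr \<gamma>" by (rule powr_mono) (use False g1 in auto)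
  finally show ?thesis by simp
qed


lemma fourier_est:
  fixes M :: "real^'n \<Rightarrow> complex" and xB \<xi> :: "real^'n" and N :: nat and \<gamma> :: real
    and W :: "real^'n \<Rightarrow> real"
  assumes Mm: "M \<in> borel_measurable lborel"
    and Wi: "integrable lborel W"
    and Wb: "\<And>x m. m \<le> N \<Longrightarrow> norm (M x) * norm (x - xB)^m \<le> W x"
    and Ji: "integrable lborel (\<lambda>x. norm (M x) * norm (x - xB) powr \<gamma>)"
    and g1: "real N < \<gamma>" and g2: "\<gamma> \<le> real N + 1"
  shows "norm (fourier_transform M \<xi>) \<le> (\<Sum>k\<le>N. (2*pi*CARD('n))^k / fact k)
      * (\<Sum>\<alpha>\<in>{\<alpha>. mi_order \<alpha> \<le> N}. norm \<xi> ^ mi_order \<alpha> * norm (\<integral>x. M x * of_real (mi_pow (x - xB) \<alpha>) \<partial>lborel))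
    + 2 * (2*pi) powr \<gamma> * norm \<xi> powr \<gamma> * (\<integral>x. norm (M x) * norm (x - xB) powr \<gamma> \<partial>lborel)"
proof -
  have [measurable]: "M \<in> borel_measurable borel" using Mm by simp
  define S where "S = {\<alpha> :: 'n \<Rightarrow> nat. mi_order \<alpha> \<le> N}"
  define T where "T = (\<Sum>\<alpha>\<in>S. norm \<xi> ^ mi_order \<alpha> * norm (\<integral>x. M x * of_real (mi_pow (x - xB) \<alpha>) \<partial>lborel))"
  have finS: "finite S" unfolding S_def by (rule finite_mi)
  have T0: "T \<ge> 0" unfolding T_def by (intro sum_nonneg) auto
  have meas_mi: "(\<lambda>x. mi_pow (x - xB) \<alpha>) \<in> borel_measurable borel" for \<alpha>
    unfolding mi_pow_def by (intro borel_measurable_continuous_onI continuous_intros)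
  have meas_in: "(\<lambda>x. (x - xB) \<bullet> \<xi>) \<in> borel_measurable borel"
    by (intro borel_measurable_continuous_onI continuous_intros)
  have intmom: "integrable lborel (\<lambda>x. M x * of_real (mi_pow (x - xB) \<alpha>))" if "\<alpha> \<in> S" for \<alpha>
  proof (rule Bochner_Integration.integrable_bound[OF Wi])
    show "(\<lambda>x. M x * of_real (mi_pow (x - xB) \<alpha>)) \<in> borel_measurable lborel"
      using meas_mi[of \<alpha>] by simp
    show "AE x in lborel. norm (M x * of_real (mi_pow (x - xB) \<alpha>)) \<le> norm (W x)"
    proof (rule AE_I2)
      fix x
      have "norm (M x * of_real (mi_pow (x - xB) \<alpha>)) = norm (M x) * \<bar>mi_pow (x - xB) \<alpha>\<bar>"
        by (simp add: norm_mult)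
      also have "\<dots> \<le> norm (M x) * norm (x - xB) ^ mi_order \<alpha>"
        by (intro mult_left_mono mi_pow_bound) simp
      also have "\<dots> \<le> W x" using that unfolding S_def by (intro Wb) simp
      finally show "norm (M x * of_real (mi_pow (x - xB) \<alpha>)) \<le> norm (W x)" by simp
    qed
  qed
  have int_k: "integrable lborel (\<lambda>x. M x * of_real (((x - xB) \<bullet> \<xi>)^k))" if kN: "k \<le> N" for k
  proof (rule Bochner_Integration.integrable_bound)
    show "integrable lborel (\<lambda>x. norm \<xi> ^ k * W x)" using Wi by simp
    show "(\<lambda>x. M x * of_real (((x - xB) \<bullet> \<xi>)^k)) \<in> borel_measurable lborel"
      using meas_in by simp
    show "AE x in lborel. norm (M x * of_real (((x - xB) \<bullet> \<xi>)^k)) \<le> norm (norm \<xi> ^ k * W x)"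
    proof (rule AE_I2)
      fix x
      have "norm (M x * of_real (((x - xB) \<bullet> \<xi>)^k)) = norm (M x) * \<bar>(x - xB) \<bullet> \<xi>\<bar>^k"
        by (simp add: norm_mult norm_power)
      also have "\<dots> \<le> norm (M x) * (norm (x - xB) * norm \<xi>)^k"
        by (intro mult_left_mono power_mono Cauchy_Schwarz_ineq2) auto
      also have "\<dots> = norm \<xi> ^ k * (norm (M x) * norm (x - xB)^k)"
        by (simp add: power_mult_distrib mult_ac)
      also have "\<dots> \<le> norm \<xi> ^ k * W x" by (intro mult_left_mono Wb kN) simp
      also have "\<dots> \<le> norm (norm \<xi> ^ k * W x)" by simp
      finally show "norm (M x * of_real (((x - xB) \<bullet> \<xi>)^k)) \<le> norm (norm \<xi> ^ k * W x)" .
    qed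
  qed
  have int_k': "integrable lborel (\<lambda>x. M x * complex_of_real ((x - xB) \<bullet> \<xi>) ^ k)" if kN: "k \<le> N" for k
    using int_k[OF kN] by simp
  have momk: "norm (\<integral>x. M x * of_real (((x - xB) \<bullet> \<xi>)^k) \<partial>lborel) \<le> real CARD('n)^k * T"
    if kN: "k \<le> N" for k
  proof -
    define G where "G = PiE {..<k} (\<lambda>_. UNIV :: 'n set)"
    have finG: "finite G" unfolding G_def by (rule finite_PiE) auto
    have cS: "cnt k g \<in> S" for g using kN unfolding S_def by (simp add: mi_order_cnt)
    have "(\<integral>x. M x * of_real (((x - xB) \<bullet> \<xi>)^k) \<partial>lborel)
        = (\<integral>x. (\<Sum>g\<in>G. of_real (mi_pow \<xi> (cnt k g)) * (M x * of_real (mi_pow (x - xB) (cnt k g)))) \<partial>lborel)"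
      by (rule Bochner_Integration.integral_cong[OF refl])
         (simp add: inner_pow_expand G_def sum_distrib_left mult_ac)
    also have "\<dots> = (\<Sum>g\<in>G. of_real (mi_pow \<xi> (cnt k g)) * (\<integral>x. M x * of_real (mi_pow (x - xB) (cnt k g)) \<partial>lborel))"
      by (subst Bochner_Integration.integral_sum)
         (auto intro!: Bochner_Integration.integrable_mult_right intmom cS)
    finally have eq: "(\<integral>x. M x * of_real (((x - xB) \<bullet> \<xi>)^k) \<partial>lborel)
        = (\<Sum>g\<in>G. of_real (mi_pow \<xi> (cnt k g)) * (\<integral>x. M x * of_real (mi_pow (x - xB) (cnt k g)) \<partial>lborel))" .
    have "norm (\<Sum>g\<in>G. of_real (mi_pow \<xi> (cnt k g)) * (\<integral>x. M x * of_real (mi_pow (x - xB) (cnt k g)) \<partial>lborel))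
        \<le> (\<Sum>g\<in>G. norm (of_real (mi_pow \<xi> (cnt k g)) * (\<integral>x. M x * of_real (mi_pow (x - xB) (cnt k g)) \<partial>lborel)))"
      by (rule norm_sum)
    also have "\<dots> \<le> (\<Sum>g\<in>G. T)"
    proof (rule sum_mono)
      fix g assume "g \<in> G"
      have "norm (of_real (mi_pow \<xi> (cnt k g)) * (\<integral>x. M x * of_real (mi_pow (x - xB) (cnt k g)) \<partial>lborel))
          = \<bar>mi_pow \<xi> (cnt k g)\<bar> * norm (\<integral>x. M x * of_real (mi_pow (x - xB) (cnt k g)) \<partial>lborel)"
        by (simp add: norm_mult)
      also have "\<dots> \<le> norm \<xi> ^ mi_order (cnt k g) * norm (\<integral>x. M x * of_real (mi_pow (x - xB) (cnt k g)) \<partial>lborel)"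
        by (intro mult_right_mono mi_pow_bound) simp
      also have "\<dots> \<le> T" unfolding T_def
        by (rule member_le_sum[OF cS _ finS]) simp
      finally show "norm (of_real (mi_pow \<xi> (cnt k g)) * (\<integral>x. M x * of_real (mi_pow (x - xB) (cnt k g)) \<partial>lborel)) \<le> T" .
    qed
    also have "\<dots> = real CARD('n)^k * T" unfolding G_def by (simp add: card_PiE_UNIV)
    finally show ?thesis unfolding eq .
  qed
  define \<theta> where "\<theta> x = -2*pi*((x - xB) \<bullet> \<xi>)" for x
  define c where "c k = \<i>^k * of_real ((-2*pi)^k) / fact k" for k :: nat
  define F where "F x = M x * iexp (\<theta> x)" for x
  define Sx where "Sx x = (\<Sum>k\<le>N. c k * (M x * of_real (((x - xB) \<bullet> \<xi>)^k)))" for x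
  have pw: "(\<i> * complex_of_real (\<theta> x))^k = \<i>^k * (of_real ((-2*pi)^k) * of_real (((x - xB) \<bullet> \<xi>)^k))" for x k
  proof -
    have "\<theta> x ^ k = (-2*pi)^k * ((x - xB) \<bullet> \<xi>)^k" unfolding \<theta>_def by (rule power_mult_distrib)
    thus ?thesis by (simp only: power_mult_distrib of_real_power[symmetric] of_real_mult[symmetric])
  qed
  have FS: "M x * (\<Sum>k\<le>N. (\<i> * of_real (\<theta> x))^k / fact k) = Sx x" for x
    unfolding Sx_def sum_distrib_left by (intro sum.cong refl) (simp only: pw, simp add: c_def field_simps)
  have ft: "fourier_transform M \<xi> = cis (-2*pi*(xB \<bullet> \<xi>)) * (\<integral>x. F x \<partial>lborel)"
  proof -
    have "fourier_transform M \<xi> = (\<integral>x. cis (-2*pi*(xB \<bullet> \<xi>)) * F x \<partial>lborel)"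
      unfolding fourier_transform_def
    proof (rule Bochner_Integration.integral_cong[OF refl])
      fix x
      have "cis (- 2 * pi * (x \<bullet> \<xi>)) = cis (-2*pi*(xB \<bullet> \<xi>)) * cis (\<theta> x)"
        unfolding \<theta>_def by (simp add: cis_mult inner_diff_left algebra_simps)
      thus "M x * cis (- 2 * pi * (x \<bullet> \<xi>)) = cis (-2*pi*(xB \<bullet> \<xi>)) * F x"
        unfolding F_def by (simp add: cis_conv_exp mult_ac)
    qed
    thus ?thesis by simp
  qed
  have Fi: "integrable lborel F"
  proof (rule Bochner_Integration.integrable_bound[OF Wi])
    show "F \<in> borel_measurable lborel" unfolding F_def \<theta>_def using meas_in by simp
    show "AE x in lborel. norm (F x) \<le> norm (W x)"
      using Wb[of 0] by (intro AE_I2) (auto simp: F_def norm_mult intro: order_trans[OF _ abs_ge_self])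
  qed
  have Si: "integrable lborel Sx" unfolding Sx_def
    by (intro Bochner_Integration.integrable_sum Bochner_Integration.integrable_mult_right int_k) auto
  define R where "R x = F x - Sx x" for x
  have Ri: "integrable lborel R" unfolding R_def using Fi Si by auto
  have R_eq: "R x = M x * (iexp (\<theta> x) - (\<Sum>k\<le>N. (\<i> * of_real (\<theta> x))^k / fact k))" for x
    unfolding R_def F_def using FS[of x] by (simp add: right_diff_distrib)
  have "norm (fourier_transform M \<xi>) = norm (\<integral>x. F x \<partial>lborel)" using ft by (simp add: norm_mult)
  also have "(\<integral>x. F x \<partial>lborel) = (\<integral>x. Sx x \<partial>lborel) + (\<integral>x. R x \<partial>lborel)"
  proof -
    have "(\<integral>x. F x \<partial>lborel) = (\<integral>x. Sx x + R x \<partial>lborel)" by (simp add: R_def)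
    also have "\<dots> = (\<integral>x. Sx x \<partial>lborel) + (\<integral>x. R x \<partial>lborel)"
      by (rule Bochner_Integration.integral_add[OF Si Ri])
    finally show ?thesis .
  qed
  also have "norm \<dots> \<le> norm (\<integral>x. Sx x \<partial>lborel) + norm (\<integral>x. R x \<partial>lborel)" by (rule norm_triangle_ineq)
  also have "norm (\<integral>x. Sx x \<partial>lborel) \<le> (\<Sum>k\<le>N. (2*pi*CARD('n))^k / fact k) * T"
  proof -
    have "(\<integral>x. Sx x \<partial>lborel) = (\<Sum>k\<le>N. c k * (\<integral>x. M x * of_real (((x - xB) \<bullet> \<xi>)^k) \<partial>lborel))"
      unfolding Sx_def
      by (subst Bochner_Integration.integral_sum)
         (auto intro!: Bochner_Integration.integrable_mult_right int_k int_k')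
    also have "norm \<dots> \<le> (\<Sum>k\<le>N. norm (c k * (\<integral>x. M x * of_real (((x - xB) \<bullet> \<xi>)^k) \<partial>lborel)))"
      by (rule norm_sum)
    also have "\<dots> \<le> (\<Sum>k\<le>N. (2*pi*CARD('n))^k / fact k * T)"
    proof (rule sum_mono)
      fix k assume "k \<in> {..N}"
      hence kN: "k \<le> N" by simp
      have nc: "norm (c k) = (2*pi)^k / fact k"
        unfolding c_def by (simp add: norm_mult norm_divide norm_power)
      have "norm (c k * (\<integral>x. M x * of_real (((x - xB) \<bullet> \<xi>)^k) \<partial>lborel))
          \<le> (2*pi)^k / fact k * (real CARD('n)^k * T)"
        unfolding norm_mult nc by (intro mult_left_mono momk kN) simp
      also have "\<dots> = (2*pi*CARD('n))^k / fact k * T" by (simp add: power_mult_distrib)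
      finally show "norm (c k * (\<integral>x. M x * of_real (((x - xB) \<bullet> \<xi>)^k) \<partial>lborel)) \<le> (2*pi*CARD('n))^k / fact k * T" .
    qed
    also have "\<dots> = (\<Sum>k\<le>N. (2*pi*CARD('n))^k / fact k) * T" by (simp add: sum_distrib_right)
    finally show ?thesis .
  qed
  also have "norm (\<integral>x. R x \<partial>lborel) \<le> 2 * (2*pi) powr \<gamma> * norm \<xi> powr \<gamma> * (\<integral>x. norm (M x) * norm (x - xB) powr \<gamma> \<partial>lborel)"
  proof -
    have ga: "\<gamma> \<ge> 0" using g1 by linarith
    have "norm (\<integral>x. R x \<partial>lborel) \<le> (\<integral>x. norm (R x) \<partial>lborel)"
      by (rule Bochner_Integration.integral_norm_bound)
    also have "\<dots> \<le> (\<integral>x. (2 * (2*pi) powr \<gamma> * norm \<xi> powr \<gamma>) * (norm (M x) * norm (x - xB) powr \<gamma>) \<partial>lborel)"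
    proof (rule Bochner_Integration.integral_mono)
      show "integrable lborel (\<lambda>x. norm (R x))" using Ri by simp
      show "integrable lborel (\<lambda>x. (2 * (2*pi) powr \<gamma> * norm \<xi> powr \<gamma>) * (norm (M x) * norm (x - xB) powr \<gamma>))"
        using Ji by simp
      fix x
      have th: "\<bar>\<theta> x\<bar> \<le> 2*pi*(norm (x - xB) * norm \<xi>)"
        unfolding \<theta>_def using Cauchy_Schwarz_ineq2[of "x - xB" \<xi>] by (simp add: abs_mult)
      have "\<bar>\<theta> x\<bar> powr \<gamma> \<le> (2*pi*(norm (x - xB) * norm \<xi>)) powr \<gamma>"
        by (rule powr_mono2) (use ga th in auto)
      also have "\<dots> = (2*pi) powr \<gamma> * norm \<xi> powr \<gamma> * norm (x - xB) powr \<gamma>"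
        by (simp add: powr_mult mult_ac)
      finally have th2: "\<bar>\<theta> x\<bar> powr \<gamma> \<le> (2*pi) powr \<gamma> * norm \<xi> powr \<gamma> * norm (x - xB) powr \<gamma>" .
      have "norm (R x) = norm (M x) * cmod (iexp (\<theta> x) - (\<Sum>k\<le>N. (\<i> * of_real (\<theta> x))^k / fact k))"
        unfolding R_eq by (simp add: norm_mult)
      also have "\<dots> \<le> norm (M x) * (2 * \<bar>\<theta> x\<bar> powr \<gamma>)"
        by (intro mult_left_mono taylor_rem g1 g2) simp
      also have "\<dots> \<le> norm (M x) * (2 * ((2*pi) powr \<gamma> * norm \<xi> powr \<gamma> * norm (x - xB) powr \<gamma>))"
        by (intro mult_left_mono th2) auto
      also have "\<dots> = (2 * (2*pi) powr \<gamma> * norm \<xi> powr \<gamma>) * (norm (M x) * norm (x - xB) powr \<gamma>)"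
        by (simp add: mult_ac)
      finally show "norm (R x) \<le> (2 * (2*pi) powr \<gamma> * norm \<xi> powr \<gamma>) * (norm (M x) * norm (x - xB) powr \<gamma>)" .
    qed
    also have "\<dots> = 2 * (2*pi) powr \<gamma> * norm \<xi> powr \<gamma> * (\<integral>x. norm (M x) * norm (x - xB) powr \<gamma> \<partial>lborel)"
      by simp
    finally show ?thesis .
  qed
  finally show ?thesis unfolding T_def S_def by simp
qed


theorem lemma4p2:
  fixes p s lam \<gamma> C :: real and N :: nat
  assumes "0 < p" "p \<le> 1" "1 \<le> s" "p < s"
    and "lam > real CARD('n) * (s / p - 1)"
    and "C > 0"
    and "gamma_p CARD('n) p < \<gamma>" "\<gamma> < lam / s - real CARD('n) * (s - 1) / s"
    and "real N < \<gamma>" "\<gamma> \<le> real N + 1"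
  shows "\<exists>K>0. \<forall>(M :: real^'n \<Rightarrow> complex) xB r.
     M \<in> borel_measurable lborel \<longrightarrow> r > 0 \<longrightarrow>
     (\<integral>\<^sup>+ x \<in> ball xB r. ennreal (norm (M x) powr s) \<partial>lborel)
        \<le> ennreal ((C * r powr (real CARD('n) * (1/s - 1/p))) powr s) \<longrightarrow>
     (\<integral>\<^sup>+ x \<in> - ball xB r. ennreal (norm (M x) powr s * norm (x - xB) powr lam) \<partial>lborel)
        \<le> ennreal ((C * r powr (lam / s + real CARD('n) * (1/s - 1/p))) powr s) \<longrightarrow>
     (\<forall>\<xi>. norm (fourier_transform M \<xi>)
        \<le> K * (norm \<xi> powr \<gamma> * r powr (\<gamma> - gamma_p CARD('n) p)
           + (\<Sum>\<alpha> \<in> {\<alpha>. mi_order \<alpha> \<le> N}.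
                norm \<xi> ^ mi_order \<alpha> * norm (\<integral>x. M x * of_real (mi_pow (x - xB) \<alpha>) \<partial>lborel))))"
proof -
  define d where "d = real CARD('n)"
  have ga: "\<gamma> \<ge> 0"
  proof -
    have "1/p \<ge> 1" using assms(1,2) by (simp add: field_simps)
    hence "gamma_p CARD('n) p \<ge> 0" unfolding gamma_p_def by simp
    thus ?thesis using assms(7) by linarith
  qed
  define Jcc where "Jcc = Jc d s lam \<gamma> C"
  have Jcc0: "Jcc \<ge> 0" unfolding Jcc_def Jc_def using assms(6)
    by (intro add_nonneg_nonneg mult_nonneg_nonneg) (auto simp: d_def)
  define A0 where "A0 = (\<Sum>k\<le>N. (2*pi*CARD('n))^k / fact k)"
  have A00: "A0 \<ge> 0" unfolding A0_def by (intro sum_nonneg) auto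
  define K where "K = A0 + 2 * (2*pi) powr \<gamma> * Jcc + 1"
  have K0: "K > 0" unfolding K_def using A00 Jcc0 by (simp add: add_nonneg_pos)
  show ?thesis
  proof (rule exI[of _ K], intro conjI allI impI)
    show "K > 0" by (rule K0)
  next
    fix M :: "real^'n \<Rightarrow> complex" and xB :: "real^'n" and r :: real and \<xi> :: "real^'n"
    assume Mm: "M \<in> borel_measurable lborel" and r: "r > 0"
      and H1: "(\<integral>\<^sup>+ x \<in> ball xB r. ennreal (norm (M x) powr s) \<partial>lborel)
        \<le> ennreal ((C * r powr (real CARD('n) * (1/s - 1/p))) powr s)"
      and H2: "(\<integral>\<^sup>+ x \<in> - ball xB r. ennreal (norm (M x) powr s * norm (x - xB) powr lam) \<partial>lborel)
        \<le> ennreal ((C * r powr (lam / s + real CARD('n) * (1/s - 1/p))) powr s)"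
    have [measurable]: "M \<in> borel_measurable borel" using Mm by simp
    have [measurable]: "ball xB r \<in> sets borel" by simp
    have gm: "(\<lambda>x. norm (M x)) \<in> borel_measurable lborel" using Mm by simp
    have g0: "\<And>x. norm (M x) \<ge> 0" by simp
    have lg': "\<gamma> < lam / s - real DIM(real^'n) * (s - 1) / s" using assms(8) by simp
    have H1': "(\<integral>\<^sup>+ x \<in> ball xB r. ennreal (norm (M x) powr s) \<partial>lborel)
        \<le> ennreal ((C * r powr (real DIM(real^'n) * (1/s - 1/p))) powr s)" using H1 by simp
    have H2': "(\<integral>\<^sup>+ x \<in> - ball xB r. ennreal (norm (M x) powr s * norm (x - xB) powr lam) \<partial>lborel)
        \<le> ennreal ((C * r powr (lam / s + real DIM(real^'n) * (1/s - 1/p))) powr s)" using H2 by simp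
    define R where "R = r powr (\<gamma> - gamma_p CARD('n) p)"
    have R0: "R > 0" unfolding R_def using r by simp
    have ex: "\<gamma> + real DIM(real^'n) - real DIM(real^'n) / p = \<gamma> - gamma_p CARD('n) p"
      unfolding gamma_p_def by (simp add: algebra_simps)
    have J: "(\<integral>\<^sup>+x. ennreal (norm (M x) * norm (x - xB) powr \<gamma>) \<partial>lborel) \<le> ennreal (Jcc * R)"
      using J_all[OF gm g0 assms(1) assms(3) assms(6) r ga lg' H1' H2'] unfolding ex
      by (simp add: Jcc_def R_def d_def)
    have Ji: "integrable lborel (\<lambda>x. norm (M x) * norm (x - xB) powr \<gamma>)"
    proof (rule integrableI_nonneg)
      show "(\<lambda>x. norm (M x) * norm (x - xB) powr \<gamma>) \<in> borel_measurable lborel" by measurable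
      show "AE x in lborel. 0 \<le> norm (M x) * norm (x - xB) powr \<gamma>" by simp
      show "(\<integral>\<^sup>+x. ennreal (norm (M x) * norm (x - xB) powr \<gamma>) \<partial>lborel) < \<infinity>"
        using J by (simp add: order.strict_trans1)
    qed
    define I where "I = (\<integral>x. norm (M x) * norm (x - xB) powr \<gamma> \<partial>lborel)"
    have IJ: "I \<le> Jcc * R"
    proof -
      have "ennreal I = (\<integral>\<^sup>+x. ennreal (norm (M x) * norm (x - xB) powr \<gamma>) \<partial>lborel)"
        unfolding I_def by (rule nn_integral_eq_integral[OF Ji, symmetric]) simp
      with J have "ennreal I \<le> ennreal (Jcc * R)" by simp
      thus ?thesis using Jcc0 R0 by simp
    qed
    have Bfin: "(\<integral>\<^sup>+x. ennreal (norm (M x) * indicator (ball xB r) x) \<partial>lborel) < \<infinity>"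
    proof -
      have "(\<integral>\<^sup>+x. ennreal (norm (M x) * indicator (ball xB r) x) \<partial>lborel)
          \<le> (\<integral>\<^sup>+x. ennreal (norm (M x) powr s) * indicator (ball xB r) x + indicator (ball xB r) x \<partial>lborel)"
      proof (rule nn_integral_mono)
        fix x
        show "ennreal (norm (M x) * indicator (ball xB r) x)
          \<le> ennreal (norm (M x) powr s) * indicator (ball xB r) x + indicator (ball xB r) x"
        proof (cases "x \<in> ball xB r")
          case True
          have "norm (M x) \<le> norm (M x) powr s + 1"
            using young1[of "norm (M x)" 1 s] assms(3) by simp
          hence "ennreal (norm (M x)) \<le> ennreal (norm (M x) powr s + 1)" by (rule ennreal_leI)
          thus ?thesis using True by (simp add: ennreal_plus)
        qed simp
      qed
      also have "\<dots> = (\<integral>\<^sup>+x. ennreal (norm (M x) powr s) * indicator (ball xB r) x \<partial>lborel)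
            + (\<integral>\<^sup>+x. indicator (ball xB r) x \<partial>lborel)"
        by (rule nn_integral_add) measurable
      also have "\<dots> \<le> ennreal ((C * r powr (real CARD('n) * (1/s - 1/p))) powr s)
            + emeasure lborel (ball xB r)"
        using H1 by (intro add_mono) simp_all
      also have "\<dots> < \<infinity>" using emeasure_ball[of r xB] r by simp
      finally show ?thesis .
    qed
    have Bi: "integrable lborel (\<lambda>x. norm (M x) * indicator (ball xB r) x)"
      by (rule integrableI_nonneg) (use Bfin in auto)
    define W where "W x = norm (M x) * indicator (ball xB r) x
        + (1 + r powr (-\<gamma>)) * (norm (M x) * norm (x - xB) powr \<gamma>)" for x
    have Wi: "integrable lborel W" unfolding W_def using Bi Ji by auto
    have Wb: "norm (M x) * norm (x - xB)^m \<le> W x" if mN: "m \<le> N" for x m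
    proof -
      define u where "u = norm (x - xB)"
      have base: "1 \<le> indicator (ball xB r) x + (1 + r powr (-\<gamma>)) * u powr \<gamma>"
      proof (cases "x \<in> ball xB r")
        case True thus ?thesis by simp
      next
        case False
        hence u: "u \<ge> r" by (simp add: u_def dist_norm norm_minus_commute)
        have "r powr \<gamma> \<le> u powr \<gamma>" by (rule powr_mono2) (use ga r u in auto)
        hence "r powr (-\<gamma>) * r powr \<gamma> \<le> r powr (-\<gamma>) * u powr \<gamma>" by (simp add: mult_left_mono)
        moreover have "r powr (-\<gamma>) * r powr \<gamma> = 1" using r by (simp add: powr_add[symmetric])
        ultimately have "1 \<le> r powr (-\<gamma>) * u powr \<gamma>" by simp
        moreover have "0 \<le> u powr \<gamma>" by simp
        ultimately show ?thesis using False by (simp add: algebra_simps, smt (verit) powr_ge_zero)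
      qed
      have "u ^ m \<le> indicator (ball xB r) x + (1 + r powr (-\<gamma>)) * u powr \<gamma>"
      proof (cases "u \<le> 1")
        case True
        have "u ^ m \<le> 1" using True by (simp add: u_def power_le_one)
        thus ?thesis using base by linarith
      next
        case False
        have "u ^ m = u powr (real m)" using False by (subst powr_realpow) auto
        also have "\<dots> \<le> u powr \<gamma>" by (rule powr_mono) (use False mN assms(9) in auto)
        also have "\<dots> \<le> (1 + r powr (-\<gamma>)) * u powr \<gamma>" by (simp add: algebra_simps)
        also have "\<dots> \<le> indicator (ball xB r) x + (1 + r powr (-\<gamma>)) * u powr \<gamma>" by simp
        finally show ?thesis .
      qed
      hence "norm (M x) * u ^ m \<le> norm (M x) * (indicator (ball xB r) x + (1 + r powr (-\<gamma>)) * u powr \<gamma>)"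
        by (rule mult_left_mono) simp
      thus ?thesis unfolding W_def u_def by (simp add: algebra_simps)
    qed
    define T where "T = (\<Sum>\<alpha>\<in>{\<alpha>. mi_order \<alpha> \<le> N}. norm \<xi> ^ mi_order \<alpha> * norm (\<integral>x. M x * of_real (mi_pow (x - xB) \<alpha>) \<partial>lborel))"
    have T0: "T \<ge> 0" unfolding T_def by (intro sum_nonneg) auto
    have FE: "norm (fourier_transform M \<xi>) \<le> A0 * T + 2 * (2*pi) powr \<gamma> * norm \<xi> powr \<gamma> * I"
      using fourier_est[OF Mm Wi Wb Ji assms(9) assms(10), of \<xi>] unfolding A0_def T_def I_def by simp
    define P where "P = norm \<xi> powr \<gamma> * R"
    have P0: "P \<ge> 0" unfolding P_def using R0 by simp
    have "2 * (2*pi) powr \<gamma> * norm \<xi> powr \<gamma> * I \<le> 2 * (2*pi) powr \<gamma> * norm \<xi> powr \<gamma> * (Jcc * R)"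
      by (intro mult_left_mono IJ) auto
    also have "\<dots> = (2 * (2*pi) powr \<gamma> * Jcc) * P" unfolding P_def by (simp add: mult_ac)
    also have "\<dots> \<le> K * P" unfolding K_def using P0 A00 by (intro mult_right_mono) auto
    finally have b2: "2 * (2*pi) powr \<gamma> * norm \<xi> powr \<gamma> * I \<le> K * P" .
    have b1: "A0 * T \<le> K * T" unfolding K_def using T0 Jcc0 by (intro mult_right_mono) auto
    have "norm (fourier_transform M \<xi>) \<le> K * (P + T)" using FE b1 b2 by (simp add: algebra_simps)
    thus "norm (fourier_transform M \<xi>)
        \<le> K * (norm \<xi> powr \<gamma> * r powr (\<gamma> - gamma_p CARD('n) p)
           + (\<Sum>\<alpha> \<in> {\<alpha>. mi_order \<alpha> \<le> N}.
                norm \<xi> ^ mi_order \<alpha> * norm (\<integral>x. M x * of_real (mi_pow (x - xB) \<alpha>) \<partial>lborel)))"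
      unfolding P_def R_def T_def .
  qed
qed


end
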